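(* Let $\Gamma$ be a connected finite simple graph and let $\mathcal{R}$ be an equivalence relation on $V(\Gamma)$ with distinct equivalence classes $C_1,\dots,C_k$, where $|C_i|=n_i$ for $1\le i\le k$. Let $\Gamma^{\mathcal{R}}$ be the $\mathcal{R}$-super $\Gamma$ graph. Then all vertices of $C_i$ have the same degree in $\Gamma^{\mathcal{R}}$; call it $d_i$. Call $C_i$ and $C_j$ ($i\neq j$) adjacent if there exist $x\in C_i$, $y\in C_j$ adjacent in $\Gamma$. Let $N$ be the $k\times k$ matrix with $N_{ii}=(n_i-1)d_i\sqrt{2}$ and, for $i\ne j$, $N_{ij}=n_j\sqrt{d_i^2+d_j^2}$ if $C_i$ and $C_j$ are adjacent and $N_{ij}=0$ otherwise. Then the characteristic polynomial of the Sombor matrix of $\Gamma^{\mathcal{R}}$ is \[\chi(S(\Gamma^{\mathcal{R}}),x)=\chi(N,x)\prod_{i=1}^{k}\left(x+d_i\sqrt{2}\right)^{n_i-1},\] where $\chi(M,x)=\det(xI-M)$.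
   Context: All graphs are finite, simple and undirected. For a graph $\Gamma$ with vertices $u_1,\dots,u_m$, the Sombor matrix $S(\Gamma)$ is the $m\times m$ matrix whose $(i,j)$ entry is $\sqrt{\deg(u_i)^2+\deg(u_j)^2}$ if $u_i$ and $u_j$ are adjacent and $0$ otherwise (so the diagonal is zero). Given a graph $\Gamma$ and an equivalence relation $\mathcal{R}$ on $V(\Gamma)$, the $\mathcal{R}$-super $\Gamma$ graph $\Gamma^{\mathcal{R}}$ has vertex set $V(\Gamma)$, and two distinct vertices $x,y$ are adjacent iff either $x,y$ lie in the same $\mathcal{R}$-class or there exist $x'\in[x]_{\mathcal{R}}$ and $y'\in[y]_{\mathcal{R}}$ with $x'$ adjacent to $y'$ in $\Gamma$. *)

theory Defs
  imports "Jordan_Normal_Form.Char_Poly"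
begin

definition simple_graph :: "'a set \<Rightarrow> ('a \<Rightarrow> 'a \<Rightarrow> bool) \<Rightarrow> bool" where
  "simple_graph V E \<longleftrightarrow> finite V \<and> (\<forall>x y. E x y \<longrightarrow> x \<in> V \<and> y \<in> V)
     \<and> (\<forall>x y. E x y \<longrightarrow> E y x) \<and> (\<forall>x. \<not> E x x)"

definition connected_graph :: "'a set \<Rightarrow> ('a \<Rightarrow> 'a \<Rightarrow> bool) \<Rightarrow> bool" where
  "connected_graph V E \<longleftrightarrow> V \<noteq> {} \<and> (\<forall>x\<in>V. \<forall>y\<in>V. E\<^sup>*\<^sup>* x y)"

definition degree :: "'a set \<Rightarrow> ('a \<Rightarrow> 'a \<Rightarrow> bool) \<Rightarrow> 'a \<Rightarrow> nat" where
  "degree V E x = card {y \<in> V. E x y}"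

definition super_adj :: "('a \<times> 'a) set \<Rightarrow> ('a \<Rightarrow> 'a \<Rightarrow> bool) \<Rightarrow> 'a \<Rightarrow> 'a \<Rightarrow> bool" where
  "super_adj R E x y \<longleftrightarrow> x \<noteq> y \<and>
     ((x, y) \<in> R \<or> (\<exists>x' y'. (x, x') \<in> R \<and> (y, y') \<in> R \<and> E x' y'))"

definition sombor_matrix :: "'a set \<Rightarrow> ('a \<Rightarrow> 'a \<Rightarrow> bool) \<Rightarrow> 'a list \<Rightarrow> real mat" where
  "sombor_matrix V E vs = mat (length vs) (length vs) (\<lambda>(i, j).
     if E (vs ! i) (vs ! j)
     then sqrt (real (degree V E (vs ! i)) ^ 2 + real (degree V E (vs ! j)) ^ 2)
     else 0)"

definition classes_adj :: "('a \<Rightarrow> 'a \<Rightarrow> bool) \<Rightarrow> 'a set \<Rightarrow> 'a set \<Rightarrow> bool" where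
  "classes_adj E C D \<longleftrightarrow> (\<exists>x\<in>C. \<exists>y\<in>D. E x y)"

definition quot_matrix :: "('a \<Rightarrow> 'a \<Rightarrow> bool) \<Rightarrow> 'a set list \<Rightarrow> (nat \<Rightarrow> real) \<Rightarrow> real mat" where
  "quot_matrix E Cs d = mat (length Cs) (length Cs) (\<lambda>(i, j).
     if i = j then (real (card (Cs ! i)) - 1) * d i * sqrt 2
     else if classes_adj E (Cs ! i) (Cs ! j)
       then real (card (Cs ! j)) * sqrt (d i ^ 2 + d j ^ 2)
       else 0)"

end

theory Submission
  imports Defs
begin
lemma sylv:
  fixes X :: "real mat"
  assumes X: "X \<in> carrier_mat m m" and Q: "Q \<in> carrier_mat m k" and P: "P \<in> carrier_mat k m"
    and Z: "Z \<in> carrier_mat k m" and ZX: "Z * X = P"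
  shows "det (X - Q * P) = det X * det (1\<^sub>m k - Z * Q)"
proof -
  define M where "M = four_block_mat X Q P (1\<^sub>m k)"
  define L1 where "L1 = four_block_mat (1\<^sub>m m) (0\<^sub>m m k) (-P) (1\<^sub>m k)"
  define L2 where "L2 = four_block_mat (1\<^sub>m m) (0\<^sub>m m k) (-Z) (1\<^sub>m k)"
  have M: "M \<in> carrier_mat (m+k) (m+k)" unfolding M_def using X Q P by auto
  have L1: "L1 \<in> carrier_mat (m+k) (m+k)" unfolding L1_def using P by auto
  have L2: "L2 \<in> carrier_mat (m+k) (m+k)" unfolding L2_def using Z by auto
  have dL1: "det L1 = 1" unfolding L1_def
    by (subst det_four_block_mat_upper_right_zero[of _ m _ k], use P in auto)
  have dL2: "det L2 = 1" unfolding L2_def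
    by (subst det_four_block_mat_upper_right_zero[of _ m _ k], use Z in auto)
  have "M * L1 = four_block_mat (X * 1\<^sub>m m + Q * (-P)) (X * 0\<^sub>m m k + Q * 1\<^sub>m k)
      (P * 1\<^sub>m m + 1\<^sub>m k * (-P)) (P * 0\<^sub>m m k + 1\<^sub>m k * 1\<^sub>m k)"
    unfolding M_def L1_def by (rule mult_four_block_mat, use X Q P in auto)
  also have "\<dots> = four_block_mat (X - Q * P) Q (0\<^sub>m k m) (1\<^sub>m k)"
  proof -
    have "X * 1\<^sub>m m + Q * (-P) = X + - (Q * P)"
      using uminus_mult_right_mat[of Q P] Q P by (simp add: right_mult_one_mat[OF X])
    also have "\<dots> = X - Q * P" by (rule add_uminus_minus_mat[OF X], use Q P in auto)
    finally have 1: "X * 1\<^sub>m m + Q * (-P) = X - Q * P" .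
    have 2: "X * 0\<^sub>m m k + Q * 1\<^sub>m k = Q"
      by (simp only: right_mult_zero_mat[OF X] right_mult_one_mat[OF Q] left_add_zero_mat[OF Q])
    have 3: "P * 1\<^sub>m m + 1\<^sub>m k * (-P) = 0\<^sub>m k m"
      by (intro eq_matI) (use P in auto)
    have 4: "P * 0\<^sub>m m k + 1\<^sub>m k * 1\<^sub>m k = (1\<^sub>m k :: real mat)"
      by (intro eq_matI) (use P in auto)
    from 1 2 3 4 show ?thesis by simp
  qed
  finally have ML1: "M * L1 = four_block_mat (X - Q * P) Q (0\<^sub>m k m) (1\<^sub>m k)" .
  have "det M = det (X - Q * P)"
  proof -
    have "det (M * L1) = det M" using det_mult[OF M L1] dL1 by simp
    moreover have "det (M * L1) = det (X - Q * P)" unfolding ML1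
      by (subst det_four_block_mat_lower_left_zero[of _ m _ k], use X Q P in auto)
    ultimately show ?thesis by simp
  qed
  moreover have "L2 * M = four_block_mat (1\<^sub>m m * X + 0\<^sub>m m k * P) (1\<^sub>m m * Q + 0\<^sub>m m k * 1\<^sub>m k)
      (- Z * X + 1\<^sub>m k * P) (- Z * Q + 1\<^sub>m k * 1\<^sub>m k)"
    unfolding M_def L2_def by (rule mult_four_block_mat, use X Q P Z in auto)
  moreover have "\<dots> = four_block_mat X Q (0\<^sub>m k m) (1\<^sub>m k - Z * Q)"
  proof -
    have 1: "1\<^sub>m m * X + 0\<^sub>m m k * P = X"
      by (intro eq_matI) (use X P in auto)
    have 2: "1\<^sub>m m * Q + 0\<^sub>m m k * 1\<^sub>m k = Q"
      by (intro eq_matI) (use Q in auto)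
    have 3: "- Z * X + 1\<^sub>m k * P = 0\<^sub>m k m"
      using uminus_mult_left_mat[of Z X] Z X ZX by (intro eq_matI) (use P in auto)
    have 4: "- Z * Q + 1\<^sub>m k * 1\<^sub>m k = 1\<^sub>m k - Z * Q"
      using uminus_mult_left_mat[of Z Q] Z Q by (intro eq_matI) (use Z Q in auto)
    from 1 2 3 4 show ?thesis by simp
  qed
  ultimately have "det (X - Q * P) = det (four_block_mat X Q (0\<^sub>m k m) (1\<^sub>m k - Z * Q))"
    using det_mult[OF L2 M] dL2 by simp
  also have "\<dots> = det X * det (1\<^sub>m k - Z * Q)"
    by (subst det_four_block_mat_lower_left_zero[of _ m _ k], use X Q Z in auto)
  finally show ?thesis .
qed

lemma poly_char_poly_mat:
  fixes f :: "nat \<times> nat \<Rightarrow> real"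
  shows "poly (char_poly (mat n n f)) x = det (mat n n (\<lambda>(i,j). (if i = j then x else 0) - f (i,j)))"
proof -
  have "poly (char_poly (mat n n f)) x = det (- char_matrix (mat n n f) x)"
    by (rule char_poly_matrix[of _ n]) auto
  also have "- char_matrix (mat n n f) x = mat n n (\<lambda>(i,j). (if i = j then x else 0) - f (i,j))"
    unfolding char_matrix_def by (intro eq_matI) auto
  finally show ?thesis .
qed

lemma det_diag_real:
  fixes g :: "nat \<Rightarrow> real"
  shows "det (mat n n (\<lambda>(i,j). if i = j then g i else 0)) = (\<Prod>i<n. g i)"
proof -
  have "det (mat n n (\<lambda>(i,j). if i = j then g i else 0)) = prod_list (diag_mat (mat n n (\<lambda>(i,j). if i = j then g i else 0)))"
    by (rule det_upper_triangular[of _ n]) (auto simp: upper_triangular_def)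
  also have "\<dots> = prod_list (map g [0..<n])" unfolding diag_mat_def by (intro arg_cong[where f=prod_list]) auto
  also have "\<dots> = prod g {0..<n}" using prod.distinct_set_conv_list[of "[0..<n]" g] by simp
  finally show ?thesis by (simp add: lessThan_atLeast0)
qed

lemma block_det:
  fixes B :: "nat \<Rightarrow> nat \<Rightarrow> real" and lam :: "nat \<Rightarrow> real" and c :: "nat \<Rightarrow> nat" and cnt :: "nat \<Rightarrow> nat"
  assumes c: "\<And>p. p < m \<Longrightarrow> c p < k"
    and cnt: "\<And>j. cnt j = card {p. p < m \<and> c p = j}"
    and pos: "\<And>j. j < k \<Longrightarrow> cnt j \<ge> 1"
    and x: "\<And>j. j < k \<Longrightarrow> x \<noteq> lam j"
  shows "poly (char_poly (mat m m (\<lambda>(p,q). B (c p) (c q) + (if p = q then lam (c p) else 0)))) x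
       = poly (char_poly (mat k k (\<lambda>(i,j). real (cnt j) * B i j + (if i = j then lam i else 0)))) x
         * (\<Prod>i<k. (x - lam i) ^ (cnt i - 1))"
proof -
  define X where "X = mat m m (\<lambda>(p,q). if p = q then x - lam (c p) else 0)"
  define Q where "Q = (mat m k (\<lambda>(p,j). if c p = j then 1 else 0) :: real mat)"
  define P where "P = mat k m (\<lambda>(i,q). B i (c q))"
  define Z where "Z = mat k m (\<lambda>(i,q). B i (c q) / (x - lam (c q)))"
  define XN where "XN = mat k k (\<lambda>(i,j). (if i = j then x else 0) - (real (cnt j) * B i j + (if i = j then lam i else 0)))"
  define D where "D = mat k k (\<lambda>(i,j). if i = j then 1 / (x - lam i) else 0)"
  have XC: "X \<in> carrier_mat m m" and QC: "Q \<in> carrier_mat m k" and PC: "P \<in> carrier_mat k m"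
    and ZC: "Z \<in> carrier_mat k m" and XNC: "XN \<in> carrier_mat k k" and DC: "D \<in> carrier_mat k k"
    unfolding X_def Q_def P_def Z_def XN_def D_def by auto
  have sumc: "(\<Sum>l = 0..<k. (if c p = l then 1 else 0) * f l) = f (c p)" if "p < m" for p and f :: "nat \<Rightarrow> real"
  proof -
    have "(\<Sum>l = 0..<k. (if c p = l then 1 else 0) * f l) = (\<Sum>l = 0..<k. if l = c p then f l else 0)"
      by (rule sum.cong) auto
    then show ?thesis using c[OF that] by simp
  qed
  have lhs: "poly (char_poly (mat m m (\<lambda>(p,q). B (c p) (c q) + (if p = q then lam (c p) else 0)))) x
      = det (X - Q * P)"
    unfolding poly_char_poly_mat
    apply (intro arg_cong[where f=det] eq_matI)
    using QC PC by (auto simp: X_def Q_def P_def scalar_prod_def sumc)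
  have ZX: "Z * X = P"
  proof (intro eq_matI)
    fix i q assume i: "i < dim_row P" and q: "q < dim_col P"
    then have q': "q < m" and i': "i < k" using PC by auto
    have ne: "x - lam (c q) \<noteq> 0" using x[OF c[OF q']] by simp
    have "(Z * X) $$ (i, q) = (\<Sum>l = 0..<m. Z $$ (i, l) * X $$ (l, q))"
      using i q PC ZC XC by (simp add: scalar_prod_def)
    also have "\<dots> = (\<Sum>l = 0..<m. if l = q then B i (c q) / (x - lam (c q)) * (x - lam (c q)) else 0)"
      by (rule sum.cong) (use i' q' in \<open>auto simp: Z_def X_def\<close>)
    also have "\<dots> = B i (c q)" using q' ne by simp
    finally show "(Z * X) $$ (i, q) = P $$ (i, q)" using i' q' by (simp add: P_def)
  qed (use ZC XC PC in auto)
  have main: "det (X - Q * P) = det X * det (1\<^sub>m k - Z * Q)"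
    by (rule sylv[OF XC QC PC ZC ZX])
  have detX: "det X = (\<Prod>j<k. (x - lam j) ^ cnt j)"
  proof -
    have "det X = (\<Prod>p<m. x - lam (c p))" unfolding X_def by (rule det_diag_real)
    also have "\<dots> = (\<Prod>j\<in>{..<k}. \<Prod>p\<in>{p. p \<in> {..<m} \<and> c p = j}. x - lam (c p))"
      by (rule prod.group[symmetric]) (use c in auto)
    also have "\<dots> = (\<Prod>j<k. (x - lam j) ^ cnt j)"
    proof (rule prod.cong[OF refl])
      fix j
      have "(\<Prod>p\<in>{p. p \<in> {..<m} \<and> c p = j}. x - lam (c p)) = (\<Prod>p\<in>{p. p < m \<and> c p = j}. x - lam j)"
        by (rule prod.cong) auto
      also have "\<dots> = (x - lam j) ^ cnt j" by (simp add: cnt)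
      finally show "(\<Prod>p\<in>{p. p \<in> {..<m} \<and> c p = j}. x - lam (c p)) = (x - lam j) ^ cnt j" .
    qed
    finally show ?thesis .
  qed
  have ZQ: "1\<^sub>m k - Z * Q = XN * D"
  proof (intro eq_matI)
    fix i j assume i: "i < dim_row (XN * D)" and j: "j < dim_col (XN * D)"
    then have i': "i < k" and j': "j < k" using XNC DC by auto
    have ne: "x - lam j \<noteq> 0" using x[OF j'] by simp
    have "(Z * Q) $$ (i, j) = (\<Sum>q = 0..<m. Z $$ (i, q) * Q $$ (q, j))"
      using i' j' ZC QC by (simp add: scalar_prod_def)
    also have "\<dots> = (\<Sum>q = 0..<m. if c q = j then B i j / (x - lam j) else 0)"
      by (rule sum.cong) (use i' j' in \<open>auto simp: Z_def Q_def\<close>)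
    also have "\<dots> = (\<Sum>q \<in> {q \<in> {0..<m}. c q = j}. B i j / (x - lam j))"
      by (rule sum.inter_filter[symmetric]) auto
    also have "{q \<in> {0..<m}. c q = j} = {p. p < m \<and> c p = j}" by auto
    also have "(\<Sum>q \<in> {p. p < m \<and> c p = j}. B i j / (x - lam j)) = real (cnt j) * B i j / (x - lam j)"
      by (simp add: cnt)
    finally have zq: "(Z * Q) $$ (i, j) = real (cnt j) * B i j / (x - lam j)" .
    have "(XN * D) $$ (i, j) = (\<Sum>l = 0..<k. XN $$ (i, l) * D $$ (l, j))"
      using i' j' XNC DC by (simp add: scalar_prod_def)
    also have "\<dots> = (\<Sum>l = 0..<k. if l = j then XN $$ (i, j) / (x - lam j) else 0)"
      by (rule sum.cong) (use i' j' in \<open>auto simp: D_def\<close>)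
    also have "\<dots> = XN $$ (i, j) / (x - lam j)" using j' by simp
    also have "\<dots> = (if i = j then 1 else 0) - real (cnt j) * B i j / (x - lam j)"
      using i' j' ne by (auto simp: XN_def field_simps)
    finally show "(1\<^sub>m k - Z * Q) $$ (i, j) = (XN * D) $$ (i, j)"
      using zq i' j' ZC QC by simp
  qed (use XNC DC ZC QC in auto)
  have detZQ: "det (1\<^sub>m k - Z * Q) = det XN * (\<Prod>j<k. 1 / (x - lam j))"
    unfolding ZQ det_mult[OF XNC DC] unfolding D_def by (rule arg_cong[where f="(*) (det XN)"], rule det_diag_real)
  have rhs: "poly (char_poly (mat k k (\<lambda>(i,j). real (cnt j) * B i j + (if i = j then lam i else 0)))) x = det XN"
    unfolding poly_char_poly_mat XN_def by (intro arg_cong[where f=det] eq_matI) auto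
  have pw: "(\<Prod>j<k. (x - lam j) ^ cnt j) * (\<Prod>j<k. 1 / (x - lam j)) = (\<Prod>i<k. (x - lam i) ^ (cnt i - 1))"
    unfolding prod.distrib[symmetric]
  proof (rule prod.cong[OF refl])
    fix j assume "j \<in> {..<k}"
    then have j: "j < k" by auto
    have ne: "x - lam j \<noteq> 0" using x[OF j] by simp
    obtain t where t: "cnt j = Suc t" using pos[OF j] by (cases "cnt j") auto
    show "(x - lam j) ^ cnt j * (1 / (x - lam j)) = (x - lam j) ^ (cnt j - 1)"
      using ne unfolding t by simp
  qed
  show ?thesis
    unfolding lhs main detX detZQ rhs pw[symmetric] by (simp add: ac_simps)
qed

lemma block_char_poly:
  fixes B :: "nat \<Rightarrow> nat \<Rightarrow> real" and lam :: "nat \<Rightarrow> real" and c :: "nat \<Rightarrow> nat" and cnt :: "nat \<Rightarrow> nat"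
  assumes c: "\<And>p. p < m \<Longrightarrow> c p < k"
    and cnt: "\<And>j. cnt j = card {p. p < m \<and> c p = j}"
    and pos: "\<And>j. j < k \<Longrightarrow> cnt j \<ge> 1"
  shows "char_poly (mat m m (\<lambda>(p,q). B (c p) (c q) + (if p = q then lam (c p) else 0)))
       = char_poly (mat k k (\<lambda>(i,j). real (cnt j) * B i j + (if i = j then lam i else 0)))
         * (\<Prod>i<k. [: - lam i, 1 :] ^ (cnt i - 1))" (is "?L = ?R")
proof (rule ccontr)
  assume ne: "?L \<noteq> ?R"
  then have "?L - ?R \<noteq> 0" by simp
  then have fin: "finite {x. poly (?L - ?R) x = 0}" by (rule poly_roots_finite)
  have "UNIV - lam ` {..<k} \<subseteq> {x. poly (?L - ?R) x = 0}"
  proof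
    fix x assume "x \<in> UNIV - lam ` {..<k}"
    then have x: "\<And>j. j < k \<Longrightarrow> x \<noteq> lam j" by auto
    have "poly ?L x = poly ?R x"
      using block_det[OF c cnt pos x] by (simp add: poly_prod)
    then show "x \<in> {x. poly (?L - ?R) x = 0}" by simp
  qed
  moreover have "infinite (UNIV - lam ` {..<k})"
    by (rule Diff_infinite_finite) (auto simp: infinite_UNIV_char_0)
  ultimately show False using fin finite_subset by blast
qed


theorem theorem3p4:
  fixes V :: "'a set" and E :: "'a \<Rightarrow> 'a \<Rightarrow> bool" and R :: "('a \<times> 'a) set"
    and vs :: "'a list" and Cs :: "'a set list"
  assumes "simple_graph V E"
    and "connected_graph V E"
    and "equiv V R"
    and "distinct vs" and "set vs = V"
    and "distinct Cs" and "set Cs = V // R"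
  defines "d \<equiv> (\<lambda>i. real (degree V (super_adj R E) (SOME x. x \<in> Cs ! i)))"
  shows "(\<forall>i < length Cs. \<forall>x \<in> Cs ! i. \<forall>y \<in> Cs ! i.
            degree V (super_adj R E) x = degree V (super_adj R E) y)
       \<and> char_poly (sombor_matrix V (super_adj R E) vs)
         = char_poly (quot_matrix E Cs d)
           * (\<Prod>i < length Cs. [: d i * sqrt 2, 1 :] ^ (card (Cs ! i) - 1))"
proof -
  note sg = assms(1) and eqv = assms(3) and dvs = assms(4) and svs = assms(5)
    and dCs = assms(6) and sCs = assms(7)
  let ?S = "super_adj R E"
  let ?deg = "degree V ?S"
  define m where "m = length vs"
  define k where "k = length Cs"
  have finV: "finite V" using sg unfolding simple_graph_def by auto
  have EV: "\<And>x y. E x y \<Longrightarrow> x \<in> V \<and> y \<in> V" using sg unfolding simple_graph_def by auto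
  have RV: "R \<subseteq> V \<times> V" using eqv unfolding equiv_def refl_on_def by auto
  have Rsym: "\<And>x y. (x, y) \<in> R \<Longrightarrow> (y, x) \<in> R" using eqv unfolding equiv_def sym_def by blast
  have Rtrans: "\<And>x y z. (x, y) \<in> R \<Longrightarrow> (y, z) \<in> R \<Longrightarrow> (x, z) \<in> R"
    using eqv unfolding equiv_def trans_def by blast
  have Rrefl: "\<And>x. x \<in> V \<Longrightarrow> (x, x) \<in> R" using eqv unfolding equiv_def refl_on_def by blast
  define Sx where "Sx u = {y \<in> V. (u, y) \<in> R \<or> (\<exists>x' y'. (u, x') \<in> R \<and> (y, y') \<in> R \<and> E x' y')}" for u
  have degSx: "?deg u = card (Sx u) - 1" if u: "u \<in> V" for u
  proof -
    have "{y \<in> V. ?S u y} = Sx u - {u}" unfolding Sx_def super_adj_def by auto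
    moreover have "u \<in> Sx u" using u Rrefl unfolding Sx_def by auto
    moreover have "finite (Sx u)" using finV unfolding Sx_def by auto
    ultimately show ?thesis unfolding degree_def by simp
  qed
  have SxR: "Sx u = Sx w" if "(u, w) \<in> R" for u w
  proof -
    have "\<And>z. (u, z) \<in> R \<longleftrightarrow> (w, z) \<in> R" using that Rsym Rtrans by blast
    then show ?thesis unfolding Sx_def by simp
  qed
  have degR: "?deg u = ?deg w" if "(u, w) \<in> R" for u w
    using that RV degSx SxR by auto
  have CsQ: "\<And>i. i < k \<Longrightarrow> Cs ! i \<in> V // R" using sCs k_def nth_mem by blast
  have Cs_cls: "Cs ! i = R `` {u}" if ik: "i < k" and ui: "u \<in> Cs ! i" for i u
  proof -
    obtain a where a: "Cs ! i = R `` {a}" "a \<in> V" using CsQ[OF ik] by (rule quotientE)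
    then have "(a, u) \<in> R" using ui by auto
    then show ?thesis using a equiv_class_eq[OF eqv] by auto
  qed
  have Cs_ne: "Cs ! i \<noteq> {}" if "i < k" for i using in_quotient_imp_non_empty[OF eqv CsQ[OF that]] .
  have Cs_sub: "Cs ! i \<subseteq> V" if "i < k" for i using in_quotient_imp_subset[OF eqv CsQ[OF that]] .
  have uniq: "i = j" if "i < k" "j < k" "u \<in> Cs ! i" "u \<in> Cs ! j" for i j u
  proof -
    have "Cs ! i = Cs ! j" using quotient_disj[OF eqv CsQ[OF that(1)] CsQ[OF that(2)]] that(3,4) by auto
    then show ?thesis using dCs that(1,2) nth_eq_iff_index_eq k_def by metis
  qed
  have ex: "\<exists>i<k. u \<in> Cs ! i" if "u \<in> V" for u
  proof -
    have "u \<in> \<Union>(V // R)" using Union_quotient[OF eqv] that by simp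
    then obtain C where "C \<in> set Cs" "u \<in> C" using sCs by auto
    then show ?thesis by (metis in_set_conv_nth k_def)
  qed
  have inR: "(u, w) \<in> R" if "i < k" "u \<in> Cs ! i" "w \<in> Cs ! i" for i u w
    using Cs_cls[OF that(1,2)] that(3) by auto
  have part1: "\<forall>i < length Cs. \<forall>x \<in> Cs ! i. \<forall>y \<in> Cs ! i. ?deg x = ?deg y"
    using inR degR k_def by blast
  have d_cls: "?deg u = d i" if "i < k" "u \<in> Cs ! i" for i u
  proof -
    have "(SOME x. x \<in> Cs ! i) \<in> Cs ! i" using Cs_ne[OF that(1)] by (simp add: some_in_eq)
    then show ?thesis unfolding d_def using degR inR that by metis
  qed
  have d_nn: "d i \<ge> 0" for i unfolding d_def by simp
  define c where "c p = (THE i. i < k \<and> vs ! p \<in> Cs ! i)" for p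
  have c: "c p < k \<and> vs ! p \<in> Cs ! (c p)" if "p < m" for p
  proof -
    have "vs ! p \<in> V" using that svs m_def nth_mem by blast
    then obtain i where i: "i < k" "vs ! p \<in> Cs ! i" using ex by blast
    have "c p = i" unfolding c_def using i uniq by (intro the_equality) auto
    then show ?thesis using i by simp
  qed
  define B where "B i j = (if i = j then sqrt 2 * d i else if classes_adj E (Cs ! i) (Cs ! j) then sqrt (d i ^ 2 + d j ^ 2) else 0)" for i j
  define lam where "lam i = - (sqrt 2 * d i)" for i
  define cnt where "cnt j = card {p. p < m \<and> c p = j}" for j
  have cnt: "cnt j = card (Cs ! j)" if "j < k" for j
  proof -
    have "(\<lambda>p. vs ! p) ` {p. p < m \<and> c p = j} = Cs ! j"
    proof
      show "(\<lambda>p. vs ! p) ` {p. p < m \<and> c p = j} \<subseteq> Cs ! j" using c by auto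
      show "Cs ! j \<subseteq> (\<lambda>p. vs ! p) ` {p. p < m \<and> c p = j}"
      proof
        fix u assume u: "u \<in> Cs ! j"
        then have "u \<in> set vs" using Cs_sub[OF that] svs by auto
        then obtain p where p: "p < m" "vs ! p = u" by (metis in_set_conv_nth m_def)
        then have "c p = j" using c[OF p(1)] uniq[OF _ that] u by auto
        then show "u \<in> (\<lambda>p. vs ! p) ` {p. p < m \<and> c p = j}" using p by auto
      qed
    qed
    moreover have "inj_on (\<lambda>p. vs ! p) {p. p < m \<and> c p = j}"
      using dvs unfolding m_def by (auto simp: inj_on_def nth_eq_iff_index_eq)
    ultimately show ?thesis unfolding cnt_def by (metis card_image)
  qed
  have pos: "cnt j \<ge> 1" if "j < k" for j
  proof -
    have "finite (Cs ! j)" using Cs_sub[OF that] finV finite_subset by auto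
    then show ?thesis using cnt[OF that] Cs_ne[OF that] by (simp add: Suc_le_eq card_gt_0_iff)
  qed
  have sq: "sqrt (d i ^ 2 + d i ^ 2) = sqrt 2 * d i" for i
  proof -
    have "sqrt (d i ^ 2 + d i ^ 2) = sqrt (2 * d i ^ 2)" by simp
    also have "\<dots> = sqrt 2 * d i" by (simp only: real_sqrt_mult real_sqrt_abs abs_of_nonneg[OF d_nn])
    finally show ?thesis .
  qed
  have S_eq: "sombor_matrix V ?S vs = mat m m (\<lambda>(p,q). B (c p) (c q) + (if p = q then lam (c p) else 0))"
    unfolding sombor_matrix_def m_def[symmetric]
  proof (intro eq_matI)
    fix p q assume "p < dim_row (mat m m (\<lambda>(p,q). B (c p) (c q) + (if p = q then lam (c p) else 0)))"
      "q < dim_col (mat m m (\<lambda>(p,q). B (c p) (c q) + (if p = q then lam (c p) else 0)))"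
    then have p: "p < m" and q: "q < m" by auto
    have cp: "c p < k" "vs ! p \<in> Cs ! c p" using c[OF p] by auto
    have cq: "c q < k" "vs ! q \<in> Cs ! c q" using c[OF q] by auto
    have dp: "real (?deg (vs ! p)) = d (c p)" using d_cls cp by auto
    have dq: "real (?deg (vs ! q)) = d (c q)" using d_cls cq by auto
    have "(if ?S (vs ! p) (vs ! q)
           then sqrt (real (?deg (vs ! p)) ^ 2 + real (?deg (vs ! q)) ^ 2) else 0)
        = B (c p) (c q) + (if p = q then lam (c p) else 0)"
    proof (cases "p = q")
      case True
      then show ?thesis by (simp add: super_adj_def B_def lam_def)
    next
      case pq: False
      then have uw: "vs ! p \<noteq> vs ! q" using dvs p q m_def nth_eq_iff_index_eq by metis
      show ?thesis
      proof (cases "c p = c q")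
        case True
        then have "(vs ! p, vs ! q) \<in> R" using inR cp cq by metis
        then have "?S (vs ! p) (vs ! q)" using uw by (simp add: super_adj_def)
        then show ?thesis using pq True dp dq sq by (simp add: B_def)
      next
        case False
        have nR: "(vs ! p, vs ! q) \<notin> R"
        proof
          assume "(vs ! p, vs ! q) \<in> R"
          then have "vs ! q \<in> Cs ! c p" using Cs_cls[OF cp] by auto
          then show False using uniq[OF cp(1) cq(1) _ cq(2)] False by auto
        qed
        have "?S (vs ! p) (vs ! q) \<longleftrightarrow> classes_adj E (Cs ! c p) (Cs ! c q)"
          unfolding super_adj_def classes_adj_def Cs_cls[OF cp] Cs_cls[OF cq] using uw nR by auto
        then show ?thesis using pq False dp dq by (simp add: B_def)
      qed
    qed
    then show "mat m m (\<lambda>(i, j). if ?S (vs ! i) (vs ! j)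
           then sqrt (real (?deg (vs ! i)) ^ 2 + real (?deg (vs ! j)) ^ 2) else 0) $$ (p, q) =
         mat m m (\<lambda>(p,q). B (c p) (c q) + (if p = q then lam (c p) else 0)) $$ (p, q)"
      using p q by simp
  qed auto
  have N_eq: "quot_matrix E Cs d = mat k k (\<lambda>(i,j). real (cnt j) * B i j + (if i = j then lam i else 0))"
    unfolding quot_matrix_def k_def[symmetric]
    by (intro eq_matI) (auto simp: cnt B_def lam_def algebra_simps)
  have P_eq: "(\<Prod>i < length Cs. [: d i * sqrt 2, 1 :] ^ (card (Cs ! i) - 1))
      = (\<Prod>i<k. [: - lam i, 1 :] ^ (cnt i - 1))"
    unfolding k_def[symmetric] by (rule prod.cong) (auto simp: cnt lam_def mult.commute)
  have "char_poly (sombor_matrix V (super_adj R E) vs)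
         = char_poly (quot_matrix E Cs d)
           * (\<Prod>i < length Cs. [: d i * sqrt 2, 1 :] ^ (card (Cs ! i) - 1))"
    unfolding S_eq N_eq P_eq
    by (rule block_char_poly) (use c cnt_def pos in auto)
  with part1 show ?thesis by blast
qed
end
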